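(* Let $\gamma\in(0,1)$, $\xi\in(\gamma,1)$, $\lambda_h=\left(\sqrt{(1-\gamma)\xi}-\sqrt{(1-\xi)\gamma}\right)^2$, $\Lambda_h=\left(\sqrt{(1-\gamma)\xi}+\sqrt{(1-\xi)\gamma}\right)^2$, and define $\tau=\left(\frac{\sqrt{\Lambda_h}-\sqrt{\lambda_h}}{\sqrt{\Lambda_h}+\sqrt{\lambda_h}}\right)^2$, $c=\frac{4}{(\sqrt{1/\Lambda_h}+\sqrt{1/\lambda_h})^2}$, $\alpha=(1-\sqrt\tau)^2$, $\beta=(1+\sqrt\tau)^2$, $\omega=\frac{4}{(\sqrt{\beta-c}+\sqrt{\alpha-c})^2}$, $\kappa=\left(\frac{\sqrt{\beta-c}-\sqrt{\alpha-c}}{\sqrt{\beta-c}+\sqrt{\alpha-c}}\right)^2$. Let $\Pi_0(x)=1$, $\Pi_1(x)=1-x$, and $\Pi_t(x)=(1+\kappa-x)\Pi_{t-1}(x)-\kappa\Pi_{t-2}(x)$ for $t\ge2$ (the orthogonal family for $\mu_\kappa$). Define $R_t(x)=\Pi_t(\omega(x-c))/\Pi_t(-\omega c)$. Then $R_t(0)=1$, $\deg(R_t)=t$, and the family $\{R_t\}$ is orthogonal with respect to the density $\frac{x\,\mu_\tau(x)}{x-c}$ on $[\alpha,\beta]$.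
   Context: For $r\in(0,1)$, $\mu_r(x)=\frac{\sqrt{((1+\sqrt r)^2-x)_+(x-(1-\sqrt r)^2)_+}}{2\pi r x}$ is the Marchenko–Pastur density with parameter $r$; in particular $\mu_\tau$ is supported on $[\alpha,\beta]$. $y_+=\max\{y,0\}$. *)

theory Defs
  imports "HOL-Analysis.Analysis" "HOL-Computational_Algebra.Polynomial"
begin

definition mp_density :: "real \<Rightarrow> real \<Rightarrow> real" where
  "mp_density r x =
     sqrt (max ((1 + sqrt r)^2 - x) 0 * max (x - (1 - sqrt r)^2) 0) / (2 * pi * r * x)"

fun Pi_poly :: "real \<Rightarrow> nat \<Rightarrow> real poly" where
  "Pi_poly k 0 = 1"
| "Pi_poly k (Suc 0) = [:1, -1:]"
| "Pi_poly k (Suc (Suc t)) = [:1 + k, -1:] * Pi_poly k (Suc t) - smult k (Pi_poly k t)"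

definition R_poly :: "real \<Rightarrow> real \<Rightarrow> real \<Rightarrow> nat \<Rightarrow> real poly" where
  "R_poly k w c t =
     smult (1 / poly (Pi_poly k t) (- w * c)) (pcompose (Pi_poly k t) [:- w * c, w:])"

end

theory Submission
  imports Defs
begin


lemma Pi_SS: "poly (Pi_poly k (Suc (Suc t))) x = (1 + k - x) * poly (Pi_poly k (Suc t)) x - k * poly (Pi_poly k t) x"
  by (simp add: algebra_simps)

lemma Pi_ge1:
  assumes "0 \<le> k" "z \<le> 0"
  shows "1 \<le> poly (Pi_poly k t) z \<and> poly (Pi_poly k t) z \<le> poly (Pi_poly k (Suc t)) z"
proof (induction t)
  case 0
  then show ?case using assms by simp
next
  case (Suc t)
  define a where "a = poly (Pi_poly k t) z"
  define b where "b = poly (Pi_poly k (Suc t)) z"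
  have ab: "1 \<le> a" "a \<le> b" using Suc by (auto simp: a_def b_def)
  have "poly (Pi_poly k (Suc (Suc t))) z = (1 + k - z) * b - k * a"
    unfolding a_def b_def by (rule Pi_SS)
  moreover have "(1 + k - z) * b - k * a - b = k * (b - a) + (-z) * b" by (simp add: algebra_simps)
  moreover have "k * (b - a) \<ge> 0" using ab assms by simp
  moreover have "(-z) * b \<ge> 0" using ab assms by (simp add: mult_nonpos_nonneg)
  ultimately show ?case using ab by (simp add: b_def)
qed

lemma Pi_deg: "degree (Pi_poly k t) = t \<and> coeff (Pi_poly k t) t = (-1)^t"
proof (induction k t rule: Pi_poly.induct)
  case (1 k) then show ?case by simp
next
  case (2 k) then show ?case by simp
next
  case (3 k t)
  let ?A = "Pi_poly k (Suc t)" and ?B = "Pi_poly k t"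
  have eq: "Pi_poly k (Suc (Suc t)) = smult (1 + k) ?A - pCons 0 ?A - smult k ?B"
    by (simp add: mult_pCons_left)
  have d1: "degree (smult (1 + k) ?A - smult k ?B) \<le> Suc t"
    using 3 by (intro degree_diff_le) (auto intro: order.trans[OF degree_smult_le])
  have "?A \<noteq> 0" using 3 by (metis coeff_0 zero_neq_neg_one power_eq_0_iff neg_equal_0_iff_equal)
  then have d2: "degree (pCons 0 ?A) = Suc (Suc t)" using 3 by simp
  have eq2: "Pi_poly k (Suc (Suc t)) = (smult (1 + k) ?A - smult k ?B) - pCons 0 ?A"
    using eq by (simp add: algebra_simps)
  have deg: "degree (Pi_poly k (Suc (Suc t))) = Suc (Suc t)"
    unfolding eq2 diff_conv_add_uminus using d1 d2 by (subst degree_add_eq_right) auto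
  have "coeff (Pi_poly k (Suc (Suc t))) (Suc (Suc t)) = - coeff ?A (Suc t)"
    unfolding eq2 using 3 coeff_eq_0[of ?B "Suc (Suc t)"] coeff_eq_0[of ?A "Suc (Suc t)"]
    by simp
  then show ?case using deg 3 by simp
qed


lemma cis_sq: "cis \<theta> ^ 2 = 2 * complex_of_real (cos \<theta>) * cis \<theta> - 1"
  by (simp add: complex_eq_iff power2_eq_square cos_diff[symmetric] sin_add[symmetric] cos_add cos_squared_eq algebra_simps)

lemma Pi_trig:
  "sin \<theta> * poly (Pi_poly (q^2) t) (1 + q^2 - 2*q*cos \<theta>)
     = Im (complex_of_real (q^t) * cis \<theta> ^ t * (cis \<theta> - complex_of_real q))"
proof (induction "q^2" t rule: Pi_poly.induct)
  case 1 then show ?case by simp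
next
  case 2 then show ?case
    by (simp add: power2_eq_square sin_add[symmetric] algebra_simps) 
next
  case (3 t)
  let ?E = "\<lambda>n. complex_of_real (q^n) * cis \<theta> ^ n * (cis \<theta> - complex_of_real q)"
  have "?E (Suc (Suc t)) = complex_of_real (2*q*cos \<theta>) * ?E (Suc t) - complex_of_real (q^2) * ?E t"
  proof -
    have "?E (Suc (Suc t)) = complex_of_real (q^t*q^2) * cis \<theta> ^ t * cis \<theta> ^ 2 * (cis \<theta> - complex_of_real q)"
      by (simp add: power_Suc power2_eq_square algebra_simps)
    also have "\<dots> = complex_of_real (2*q*cos \<theta>) * ?E (Suc t) - complex_of_real (q^2) * ?E t"
      unfolding cis_sq by (simp add: power2_eq_square algebra_simps)
    finally show ?thesis .
  qed
  then have imE: "Im (?E (Suc (Suc t))) = 2*q*cos \<theta> * Im (?E (Suc t)) - q^2 * Im (?E t)"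
    by simp
  let ?Y = "1 + q^2 - 2*q*cos \<theta>"
  have e1: "sin \<theta> * poly (Pi_poly (q^2) (Suc (Suc t))) ?Y
     = (2*q*cos \<theta>) * (sin \<theta> * poly (Pi_poly (q^2) (Suc t)) ?Y) - q^2 * (sin \<theta> * poly (Pi_poly (q^2) t) ?Y)"
    by (simp only: Pi_SS) (simp add: algebra_simps)
  show ?case unfolding e1 3(1) 3(2) by (rule imE[symmetric])
qed
definition Bq :: "real \<Rightarrow> complex \<Rightarrow> complex" where
  "Bq q w = (if q = 1 then -1 else (w - complex_of_real q) / (1 - complex_of_real q * w))"

lemma Yw: "complex_of_real (1 + q^2 - 2*q*cos \<theta>) * cis \<theta> = (cis \<theta> - complex_of_real q) * (1 - complex_of_real q * cis \<theta>)"
  by (simp add: complex_eq_iff power2_eq_square algebra_simps sin_squared_eq)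
     (metis distrib_left mult.right_neutral sin_cos_squared_add3)

lemma Ycnj: "(cis \<theta> - complex_of_real q) * cnj (cis \<theta> - complex_of_real q) = complex_of_real (1 + q^2 - 2*q*cos \<theta>)"
  by (simp add: complex_eq_iff power2_eq_square algebra_simps sin_squared_eq)

lemma sq_id:
  assumes "0 \<le> q" "q \<le> 1"
  shows "(cis \<theta> - complex_of_real q)^2 = complex_of_real (1 + q^2 - 2*q*cos \<theta>) * cis \<theta> * Bq q (cis \<theta>)"
proof (cases "q = 1")
  case True
  show ?thesis unfolding Yw using True by (simp add: Bq_def power2_eq_square algebra_simps)
next
  case False
  then have q1: "q < 1" using assms by simp
  have "norm (complex_of_real q * cis \<theta>) = q" using assms by (simp add: norm_mult)
  then have "1 - complex_of_real q * cis \<theta> \<noteq> 0" using q1 by auto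
  then show ?thesis unfolding Yw using False by (simp add: Bq_def power2_eq_square field_simps)
qed

lemma ImIm: "Im a * Im b = (Re (a * cnj b) - Re (a * b)) / 2"
  by simp

lemma prod_id:
  assumes "0 \<le> q" "q \<le> 1"
  shows "(sin \<theta>)^2 * poly (Pi_poly (q^2) s) (1 + q^2 - 2*q*cos \<theta>) * poly (Pi_poly (q^2) t) (1 + q^2 - 2*q*cos \<theta>)
    = q^(s+t) / 2 * ((1 + q^2 - 2*q*cos \<theta>) * cos ((real s - real t) * \<theta>)
        - (1 + q^2 - 2*q*cos \<theta>) * Re (cis \<theta> ^ (s+t+1) * Bq q (cis \<theta>)))"
proof -
  define w where "w = cis \<theta>"
  define Y where "Y = 1 + q^2 - 2*q*cos \<theta>"
  define a where "a = complex_of_real (q^s) * w ^ s * (w - complex_of_real q)"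
  define b where "b = complex_of_real (q^t) * w ^ t * (w - complex_of_real q)"
  have "(sin \<theta>)^2 * poly (Pi_poly (q^2) s) Y * poly (Pi_poly (q^2) t) Y
      = (sin \<theta> * poly (Pi_poly (q^2) s) Y) * (sin \<theta> * poly (Pi_poly (q^2) t) Y)"
    by (simp add: power2_eq_square)
  also have "\<dots> = Im a * Im b" unfolding a_def b_def w_def Y_def Pi_trig ..
  also have "\<dots> = (Re (a * cnj b) - Re (a * b)) / 2" by (rule ImIm)
  also have "a * cnj b = complex_of_real (q^(s+t)) * (w^s * cnj w ^ t) * ((w - complex_of_real q) * cnj (w - complex_of_real q))"
    unfolding a_def b_def by (simp add: power_add algebra_simps)
  also have "w^s * cnj w ^ t = cis ((real s - real t) * \<theta>)"
    unfolding w_def cis_cnj by (simp add: Complex.DeMoivre cis_mult algebra_simps)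
  also have "(w - complex_of_real q) * cnj (w - complex_of_real q) = complex_of_real Y"
    unfolding w_def Y_def by (rule Ycnj)
  also have "a * b = complex_of_real (q^(s+t)) * w^(s+t) * (w - complex_of_real q)^2"
    unfolding a_def b_def by (simp add: power_add power2_eq_square algebra_simps)
  also have "(w - complex_of_real q)^2 = complex_of_real Y * w * Bq q w"
    unfolding w_def Y_def by (rule sq_id[OF assms])
  finally show ?thesis unfolding Y_def[symmetric] w_def[symmetric]
    by (simp add: power_add algebra_simps)
qed


lemma cos_int:
  assumes "n \<ge> 1"
  shows "((\<lambda>\<theta>. cos (real n * \<theta>)) has_integral 0) {0..pi}"
proof -
  have "((\<lambda>\<theta>. cos (real n * \<theta>)) has_integral (sin (real n * pi) / real n - sin (real n * 0) / real n)) {0..pi}"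
  proof (rule fundamental_theorem_of_calculus)
    show "0 \<le> pi" by simp
    fix x assume "x \<in> {0..pi}"
    show "((\<lambda>\<theta>. sin (real n * \<theta>) / real n) has_vector_derivative cos (real n * x)) (at x within {0..pi})"
      unfolding has_real_derivative_iff_has_vector_derivative[symmetric]
      using assms by (auto intro!: derivative_eq_intros)
  qed
  then show ?thesis by simp
qed

definition ff :: "real \<Rightarrow> nat \<Rightarrow> real \<Rightarrow> real" where
  "ff q m \<theta> = Re (cis \<theta> ^ m * Bq q (cis \<theta>))"

lemma ff_cont:
  assumes "0 \<le> q" "q \<le> 1"
  shows "continuous_on S (ff q m)"
proof (cases "q = 1")
  case True
  then show ?thesis unfolding ff_def Bq_def by (auto intro!: continuous_intros)
next
  case False
  then have q1: "q < 1" using assms by simp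
  have nz: "1 - complex_of_real q * cis \<theta> \<noteq> 0" for \<theta>
  proof -
    have "norm (complex_of_real q * cis \<theta>) = q" using assms by (simp add: norm_mult)
    then show ?thesis using q1 by auto
  qed
  show ?thesis unfolding ff_def Bq_def using False nz by (auto intro!: continuous_intros)
qed

lemma norm_Bq:
  assumes "0 \<le> q" "q \<le> 1"
  shows "norm (Bq q (cis \<theta>)) = 1"
proof (cases "q = 1")
  case True then show ?thesis by (simp add: Bq_def)
next
  case False
  then have q1: "q < 1" using assms by simp
  have "norm (cis \<theta> - complex_of_real q) = norm (1 - complex_of_real q * cis \<theta>)"
    unfolding cmod_def by (simp add: power2_eq_square algebra_simps)
       (metis distrib_left mult.right_neutral sin_cos_squared_add3)
  moreover have "norm (complex_of_real q * cis \<theta>) = q" using assms by (simp add: norm_mult)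
  then have "1 - complex_of_real q * cis \<theta> \<noteq> 0" using q1 by auto
  ultimately show ?thesis using False by (simp add: Bq_def norm_divide)
qed

lemma ff_bound:
  assumes "0 \<le> q" "q \<le> 1"
  shows "norm (ff q m \<theta>) \<le> 1"
proof -
  have "norm (ff q m \<theta>) \<le> norm (cis \<theta> ^ m * Bq q (cis \<theta>))"
    unfolding ff_def real_norm_def by (rule abs_Re_le_cmod)
  also have "\<dots> = 1" using norm_Bq[OF assms] by (simp add: norm_mult norm_power)
  finally show ?thesis .
qed

lemma ff_rec:
  assumes "0 \<le> q" "q \<le> 1"
  shows "ff q m \<theta> - q * ff q (Suc m) \<theta> = cos (real (Suc m) * \<theta>) - q * cos (real m * \<theta>)"
proof -
  have "cis \<theta> ^ m * Bq q (cis \<theta>) - complex_of_real q * (cis \<theta> ^ Suc m * Bq q (cis \<theta>))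
      = cis \<theta> ^ Suc m - complex_of_real q * cis \<theta> ^ m"
  proof (cases "q = 1")
    case True then show ?thesis by (simp add: Bq_def algebra_simps)
  next
    case False
    then have q1: "q < 1" using assms by simp
    have "norm (complex_of_real q * cis \<theta>) = q" using assms by (simp add: norm_mult)
    then have "1 - complex_of_real q * cis \<theta> \<noteq> 0" using q1 by auto
    then have "Bq q (cis \<theta>) * (1 - complex_of_real q * cis \<theta>) = cis \<theta> - complex_of_real q"
      using False by (simp add: Bq_def)
    moreover have "cis \<theta> ^ m * Bq q (cis \<theta>) - complex_of_real q * (cis \<theta> ^ Suc m * Bq q (cis \<theta>))
      = cis \<theta> ^ m * (Bq q (cis \<theta>) * (1 - complex_of_real q * cis \<theta>))" by (simp add: algebra_simps)
    ultimately have "cis \<theta> ^ m * Bq q (cis \<theta>) - complex_of_real q * (cis \<theta> ^ Suc m * Bq q (cis \<theta>))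
      = cis \<theta> ^ m * (cis \<theta> - complex_of_real q)" by simp
    then show ?thesis by (simp add: power_Suc algebra_simps)
  qed
  then have "Re (cis \<theta> ^ m * Bq q (cis \<theta>) - complex_of_real q * (cis \<theta> ^ Suc m * Bq q (cis \<theta>)))
      = Re (cis \<theta> ^ Suc m - complex_of_real q * cis \<theta> ^ m)" by simp
  moreover have "ff q m \<theta> - q * ff q (Suc m) \<theta> = Re (cis \<theta> ^ m * Bq q (cis \<theta>) - complex_of_real q * (cis \<theta> ^ Suc m * Bq q (cis \<theta>)))"
    unfolding ff_def by simp
  moreover have "Re (cis \<theta> ^ Suc m - complex_of_real q * cis \<theta> ^ m) = cos (real (Suc m) * \<theta>) - q * cos (real m * \<theta>)"
    unfolding Complex.DeMoivre by simp
  ultimately show ?thesis by simp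
qed
lemma ff_int:
  assumes "0 \<le> q" "q \<le> 1" "m \<ge> 1"
  shows "(ff q m has_integral 0) {0..pi}"
proof (cases "q = 1")
  case True
  have "((\<lambda>\<theta>. - cos (real m * \<theta>)) has_integral - 0) {0..pi}"
    by (rule has_integral_neg[OF cos_int[OF assms(3)]])
  moreover have "- cos (real m * \<theta>) = ff q m \<theta>" for \<theta>
    unfolding ff_def Bq_def using True by (simp add: Complex.DeMoivre)
  ultimately show ?thesis by simp
next
  case False
  then have q1: "q < 1" using assms by simp
  define J where "J n = integral {0..pi} (ff q n)" for n
  have hasJ: "(ff q n has_integral J n) {0..pi}" for n
    unfolding J_def by (intro integrable_integral integrable_continuous_real ff_cont assms(1,2))
  have rec: "J n = q * J (Suc n)" if "n \<ge> 1" for n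
  proof -
    have "((\<lambda>\<theta>. ff q n \<theta> - q * ff q (Suc n) \<theta>) has_integral (J n - q * J (Suc n))) {0..pi}"
      by (rule has_integral_diff[OF hasJ has_integral_mult_right[OF hasJ]])
    moreover have "((\<lambda>\<theta>. ff q n \<theta> - q * ff q (Suc n) \<theta>) has_integral (0 - q * 0)) {0..pi}"
      unfolding ff_rec[OF assms(1,2)]
      by (rule has_integral_diff[OF cos_int has_integral_mult_right[OF cos_int]]) (use that in auto)
    ultimately have "J n - q * J (Suc n) = 0 - q * 0" by (rule has_integral_unique)
    then show ?thesis by simp
  qed
  have bnd: "\<bar>J n\<bar> \<le> pi" for n
    using has_integral_bound_real[of 1 "{}" "ff q n" "J n" 0 pi] hasJ ff_bound[OF assms(1,2)] by simp
  have pw: "J m = q ^ k * J (m + k)" for k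
  proof (induction k)
    case 0 then show ?case by simp
  next
    case (Suc k)
    have "J (m + k) = q * J (Suc (m + k))" using rec[of "m + k"] assms(3) by simp
    then show ?case using Suc by simp
  qed
  show ?thesis
  proof (cases "J m = 0")
    case True then show ?thesis using hasJ[of m] by simp
  next
    case False
    then have "\<bar>J m\<bar> / pi > 0" by simp
    then obtain k where k: "q ^ k < \<bar>J m\<bar> / pi" using real_arch_pow_inv q1 by blast
    have "\<bar>J m\<bar> = q ^ k * \<bar>J (m + k)\<bar>" using pw[of k] assms(1) by (simp add: abs_mult)
    also have "\<dots> \<le> q ^ k * pi" using bnd assms(1) by (simp add: mult_left_mono)
    also have "\<dots> < \<bar>J m\<bar>" using k by (simp add: field_simps)
    finally show ?thesis by simp
  qed
qed


lemma h_int: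
  assumes "0 \<le> q" "q \<le> 1" "s < t"
  shows "((\<lambda>\<theta>. q^(s+t)/2 * (cos ((real s - real t) * \<theta>) - ff q (s+t+1) \<theta>)) has_integral 0) {0..pi}"
proof -
  have c: "cos ((real s - real t) * \<theta>) = cos (real (t - s) * \<theta>)" for \<theta>
  proof -
    have "(real s - real t) * \<theta> = - (real (t - s) * \<theta>)" using assms(3) by (simp add: of_nat_diff algebra_simps)
    then show ?thesis by simp
  qed
  have "((\<lambda>\<theta>. cos (real (t - s) * \<theta>) - ff q (s+t+1) \<theta>) has_integral (0 - 0)) {0..pi}"
    by (rule has_integral_diff[OF cos_int ff_int]) (use assms in auto)
  then have "((\<lambda>\<theta>. q^(s+t)/2 * (cos (real (t - s) * \<theta>) - ff q (s+t+1) \<theta>)) has_integral (q^(s+t)/2 * (0 - 0))) {0..pi}"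
    by (rule has_integral_mult_right)
  then show ?thesis unfolding c by simp
qed

lemma orth_x:
  fixes q \<omega> c \<alpha> \<beta> :: real
  assumes q0: "0 < q" and q1: "q \<le> 1" and w0: "0 < \<omega>"
    and hb: "\<omega> * (\<beta> - c) = (1 + q)^2" and ha: "\<omega> * (\<alpha> - c) = (1 - q)^2" and st: "s < t"
  shows "((\<lambda>x. poly (Pi_poly (q^2) s) (\<omega> * (x - c)) * poly (Pi_poly (q^2) t) (\<omega> * (x - c))
            * sqrt ((\<beta> - x) * (x - \<alpha>)) / (x - c)) has_integral 0) {\<alpha>..\<beta>}"
proof -
  define I where "I x = poly (Pi_poly (q^2) s) (\<omega> * (x - c)) * poly (Pi_poly (q^2) t) (\<omega> * (x - c))
            * sqrt ((\<beta> - x) * (x - \<alpha>)) / (x - c)" for x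
  define h where "h \<theta> = q^(s+t)/2 * (cos ((real s - real t) * \<theta>) - ff q (s+t+1) \<theta>)" for \<theta>
  have hc: "continuous_on {0..pi} h"
    unfolding h_def using ff_cont[of q _ "s+t+1"] q0 q1 by (auto intro!: continuous_intros)
  have hi: "(h has_integral 0) {0..pi}" unfolding h_def using h_int[of q s t] q0 q1 st by simp
  define F where "F \<phi> = integral {0..\<phi>} h" for \<phi>
  have Fd: "(F has_vector_derivative h \<phi>) (at \<phi> within {0..pi})" if "\<phi> \<in> {0..pi}" for \<phi>
    unfolding F_def by (rule integral_has_vector_derivative[OF hc that])
  have Fc: "continuous_on {0..pi} F"
    using Fd has_vector_derivative_continuous continuous_on_eq_continuous_within by blast
  define u where "u x = (1 + q^2 - \<omega> * (x - c)) / (2 * q)" for x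
  have key: "(2*q)^2 * (1 - (u x)^2) = (\<omega> * (\<beta> - x)) * (\<omega> * (x - \<alpha>))" for x
  proof -
    have e1: "\<omega> * (\<beta> - x) = (1 + q)^2 - \<omega> * (x - c)" using hb by (simp add: algebra_simps)
    have e2: "\<omega> * (x - \<alpha>) = \<omega> * (x - c) - (1 - q)^2" using ha by (simp add: algebra_simps)
    have e3: "u x * (2 * q) = 1 + q^2 - \<omega> * (x - c)" unfolding u_def using q0 by simp
    have "(2*q)^2 * (1 - (u x)^2) = (2*q)^2 - (u x * (2 * q))^2" by (simp add: algebra_simps power2_eq_square)
    also have "\<dots> = ((1 + q)^2 - \<omega> * (x - c)) * (\<omega> * (x - c) - (1 - q)^2)"
      unfolding e3 by (simp add: algebra_simps power2_eq_square)
    finally show ?thesis unfolding e1 e2 .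
  qed
  have ab: "\<alpha> < \<beta>"
  proof -
    have "(1 - q)^2 < (1 + q)^2" using q0 by (simp add: power2_eq_square algebra_simps)
    then have "\<omega> * (\<alpha> - c) < \<omega> * (\<beta> - c)" using ha hb by simp
    then show ?thesis using w0 by simp
  qed
  have ubd: "-1 \<le> u x \<and> u x \<le> 1" if "x \<in> {\<alpha>..\<beta>}" for x
  proof -
    have "0 \<le> (\<omega> * (\<beta> - x)) * (\<omega> * (x - \<alpha>))" using that w0 by simp
    then have "0 \<le> (2*q)^2 * (1 - (u x)^2)" using key by simp
    then have "(u x)^2 \<le> 1" using q0 by (simp add: zero_le_mult_iff)
    then have "\<bar>u x\<bar> \<le> 1" using abs_square_le_1 by blast
    then show ?thesis by auto
  qed
  have ubd2: "-1 < u x \<and> u x < 1" if "x \<in> {\<alpha><..<\<beta>}" for x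
  proof -
    have "0 < (\<omega> * (\<beta> - x)) * (\<omega> * (x - \<alpha>))" using that w0 by simp
    then have "0 < (2*q)^2 * (1 - (u x)^2)" using key by simp
    then have "(u x)^2 < 1" using q0 by (simp add: zero_less_mult_iff)
    then have "\<bar>u x\<bar> < 1" using abs_square_less_1 by blast
    then show ?thesis by auto
  qed
  define G where "G x = F (arccos (u x))" for x
  have Gc: "continuous_on {\<alpha>..\<beta>} G"
  proof -
    have "continuous_on {\<alpha>..\<beta>} (\<lambda>x. arccos (u x))"
      unfolding u_def using ubd q0 unfolding u_def by (intro continuous_intros) auto
    moreover have "(\<lambda>x. arccos (u x)) ` {\<alpha>..\<beta>} \<subseteq> {0..pi}" using ubd arccos_bounded by auto
    ultimately show ?thesis unfolding G_def using continuous_on_compose2[OF Fc] by blast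
  qed
  define k where "k = \<omega> / (4 * q^2)"
  have Gd: "(G has_vector_derivative k * I x) (at x)" if x: "x \<in> {\<alpha><..<\<beta>}" for x
  proof -
    define \<theta> where "\<theta> = arccos (u x)"
    have ux: "-1 < u x" "u x < 1" using ubd2[OF x] by auto
    have th: "0 < \<theta>" "\<theta> < pi" unfolding \<theta>_def using arccos_lt_bounded[OF ux] by auto
    have dF: "(F has_real_derivative h \<theta>) (at \<theta>)"
    proof -
      have "(F has_vector_derivative h \<theta>) (at \<theta> within {0..pi})" by (rule Fd) (use th in auto)
      moreover have "at \<theta> within {0..pi} = at \<theta>" by (rule at_within_interior) (use th in simp)
      ultimately have "(F has_vector_derivative h \<theta>) (at \<theta>)" by simp
      then show ?thesis by (simp add: has_real_derivative_iff_has_vector_derivative)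
    qed
    have du: "(u has_real_derivative (- \<omega> / (2 * q))) (at x)"
      unfolding u_def using q0 by (auto intro!: derivative_eq_intros)
    have dA: "((\<lambda>x. arccos (u x)) has_real_derivative inverse (- sqrt (1 - (u x)^2)) * (- \<omega> / (2 * q))) (at x)"
      by (rule DERIV_chain2[OF DERIV_arccos[OF ux] du])
    have dG: "(G has_real_derivative h \<theta> * (inverse (- sqrt (1 - (u x)^2)) * (- \<omega> / (2 * q)))) (at x)"
      unfolding G_def \<theta>_def by (rule DERIV_chain2[OF dF[unfolded \<theta>_def] dA])
    define S where "S = sqrt (1 - (u x)^2)"
    have S0: "0 < S" unfolding S_def using ux by (simp add: abs_square_less_1)
    have cth: "cos \<theta> = u x" unfolding \<theta>_def using ux by simp
    have sth: "sin \<theta> = S" unfolding \<theta>_def S_def using ux by (simp add: sin_arccos)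
    have Y: "1 + q^2 - 2*q*cos \<theta> = \<omega> * (x - c)" unfolding cth u_def using q0 by simp
    have xc: "0 < \<omega> * (x - c)"
    proof -
      have "\<omega> * (x - c) = \<omega> * (x - \<alpha>) + (1 - q)^2" using ha by (simp add: algebra_simps)
      moreover have "0 < \<omega> * (x - \<alpha>)" using x w0 by simp
      moreover have "0 \<le> (1 - q)^2" by simp
      ultimately show ?thesis by linarith
    qed
    define P where "P = poly (Pi_poly (q^2) s) (\<omega> * (x - c)) * poly (Pi_poly (q^2) t) (\<omega> * (x - c))"
    have pid: "S^2 * P = q^(s+t)/2 * ((\<omega> * (x - c)) * cos ((real s - real t) * \<theta>) - (\<omega> * (x - c)) * ff q (s+t+1) \<theta>)"
      using prod_id[of q \<theta> s t, unfolded ff_def[symmetric] Y sth] q0 q1 unfolding P_def by (simp add: mult.assoc)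
    have hth: "h \<theta> * (\<omega> * (x - c)) = S^2 * P"
      unfolding pid h_def by (simp add: field_simps)
    have sq: "sqrt ((\<beta> - x) * (x - \<alpha>)) = 2 * q * S / \<omega>"
    proof -
      have u2: "0 < 1 - (u x)^2" using S0 unfolding S_def by simp
      have S2: "S^2 = 1 - (u x)^2" unfolding S_def using u2 by simp
      have "(2 * q * S / \<omega>)^2 = ((2*q)^2 * S^2) / \<omega>^2" by (simp add: power_divide power_mult_distrib)
      also have "\<dots> = ((\<omega> * (\<beta> - x)) * (\<omega> * (x - \<alpha>))) / \<omega>^2" unfolding S2 key ..
      also have "\<dots> = (\<beta> - x) * (x - \<alpha>)" using w0 by (simp add: power2_eq_square field_simps)
      finally have "sqrt ((\<beta> - x) * (x - \<alpha>)) = sqrt ((2 * q * S / \<omega>)^2)" by simp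
      also have "\<dots> = 2 * q * S / \<omega>" using q0 S0 w0 by simp
      finally show ?thesis .
    qed
    have "h \<theta> * (inverse (- sqrt (1 - (u x)^2)) * (- \<omega> / (2 * q))) = k * I x"
    proof -
      have hv: "h \<theta> = S^2 * P / (\<omega> * (x - c))" using hth xc by (subst eq_divide_eq) auto
      have xc': "x - c > 0" using xc w0 by (simp add: zero_less_mult_iff)
      show ?thesis unfolding hv I_def P_def[symmetric] sq k_def S_def[symmetric]
        using S0 q0 w0 xc' by (simp add: divide_simps power2_eq_square)
    qed
    then show ?thesis using dG by (simp add: has_real_derivative_iff_has_vector_derivative)
  qed
  have "((\<lambda>x. k * I x) has_integral (G \<beta> - G \<alpha>)) {\<alpha>..\<beta>}"
    by (rule fundamental_theorem_of_calculus_interior[OF less_imp_le[OF ab] Gc Gd])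
  moreover have "u \<beta> = -1" "u \<alpha> = 1"
    unfolding u_def using hb ha q0 by (simp_all add: field_simps power2_eq_square)
  moreover have "F pi = 0" unfolding F_def using hi by (simp add: integral_unique)
  moreover have "F 0 = 0" unfolding F_def by simp
  ultimately have "((\<lambda>x. k * I x) has_integral 0) {\<alpha>..\<beta>}" unfolding G_def by simp
  then have "((\<lambda>x. (1/k) * (k * I x)) has_integral (1/k) * 0) {\<alpha>..\<beta>}" by (rule has_integral_mult_right)
  moreover have "k \<noteq> 0" unfolding k_def using q0 w0 by simp
  ultimately show ?thesis unfolding I_def by simp
qed


lemma params:
  fixes c \<alpha> \<beta> :: real
  assumes "c \<le> \<alpha>" "\<alpha> < \<beta>"
  defines "u \<equiv> sqrt (\<beta> - c)" and "v \<equiv> sqrt (\<alpha> - c)"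
  defines "q \<equiv> (u - v) / (u + v)" and "\<omega> \<equiv> 4 / (u + v)^2"
  shows "0 < q" "q \<le> 1" "0 < \<omega>" "\<omega> * (\<beta> - c) = (1 + q)^2" "\<omega> * (\<alpha> - c) = (1 - q)^2"
proof -
  have v0: "0 \<le> v" unfolding v_def using assms(1) by simp
  have uv: "v < u" unfolding u_def v_def using assms(1,2) by simp
  have s: "0 < u + v" using v0 uv by linarith
  show "0 < q" unfolding q_def using s uv by simp
  show "q \<le> 1" unfolding q_def using s v0 by simp
  show "0 < \<omega>" unfolding \<omega>_def using s by simp
  have u2: "u^2 = \<beta> - c" unfolding u_def using assms by simp
  have v2: "v^2 = \<alpha> - c" unfolding v_def using assms by simp
  have q1: "1 + q = 2 * u / (u + v)" unfolding q_def using s by (simp add: field_simps)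
  have "\<omega> * (\<beta> - c) = (2 * u / (u + v))^2" unfolding \<omega>_def u2[symmetric] by (simp add: power_divide power_mult_distrib)
  then show "\<omega> * (\<beta> - c) = (1 + q)^2" unfolding q1 .
  have q2: "1 - q = 2 * v / (u + v)" unfolding q_def using s by (simp add: field_simps)
  have "\<omega> * (\<alpha> - c) = (2 * v / (u + v))^2" unfolding \<omega>_def v2[symmetric] by (simp add: power_divide power_mult_distrib)
  then show "\<omega> * (\<alpha> - c) = (1 - q)^2" unfolding q2 .
qed

lemma gx_params:
  fixes \<gamma> \<xi> :: real
  assumes "0 < \<gamma>" "\<gamma> < 1" "\<gamma> < \<xi>" "\<xi> < 1"
  defines "lh \<equiv> (sqrt ((1 - \<gamma>) * \<xi>) - sqrt ((1 - \<xi>) * \<gamma>))^2"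
      and "Lh \<equiv> (sqrt ((1 - \<gamma>) * \<xi>) + sqrt ((1 - \<xi>) * \<gamma>))^2"
  defines "\<tau> \<equiv> ((sqrt Lh - sqrt lh) / (sqrt Lh + sqrt lh))^2"
      and "c \<equiv> 4 / (sqrt (1 / Lh) + sqrt (1 / lh))^2"
  defines "\<alpha> \<equiv> (1 - sqrt \<tau>)^2"
      and "\<beta> \<equiv> (1 + sqrt \<tau>)^2"
  shows "0 < c \<and> c \<le> \<alpha> \<and> \<alpha> < \<beta>"
proof -
  define a where "a = sqrt ((1 - \<gamma>) * \<xi>)"
  define b where "b = sqrt ((1 - \<xi>) * \<gamma>)"
  have b0: "0 < b" unfolding b_def using assms by simp
  have ab: "b < a" unfolding a_def b_def using assms by (simp add: algebra_simps)
  define X where "X = (1 - \<gamma>) * (1 - \<xi>)"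
  define Y where "Y = \<xi> * \<gamma>"
  have X0: "0 \<le> X" "0 \<le> Y" unfolding X_def Y_def using assms by auto
  have abXY: "a * b = sqrt X * sqrt Y" unfolding a_def b_def X_def Y_def
    by (simp add: real_sqrt_mult[symmetric] algebra_simps)
  have "0 \<le> (sqrt X - sqrt Y)^2" by simp
  then have "2 * (a * b) \<le> X + Y" unfolding abXY using X0 by (simp add: power2_eq_square algebra_simps)
  moreover have "a^2 = (1 - \<gamma>) * \<xi>" "b^2 = (1 - \<xi>) * \<gamma>" unfolding a_def b_def using assms by simp_all
  ultimately have "(a + b)^2 \<le> 1" unfolding X_def Y_def by (simp add: power2_eq_square algebra_simps)
  then have ab1: "(a + b)^2 \<le> 1" .
  have sL: "sqrt Lh = a + b" unfolding Lh_def a_def[symmetric] b_def[symmetric] using b0 ab by simp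
  have sl: "sqrt lh = a - b" unfolding lh_def a_def[symmetric] b_def[symmetric] using b0 ab by simp
  have st: "sqrt \<tau> = b / a" unfolding \<tau>_def sL sl using b0 ab by simp
  have sL': "sqrt (1 / Lh) = 1 / (a + b)" using sL by (simp add: real_sqrt_divide)
  have sl': "sqrt (1 / lh) = 1 / (a - b)" using sl by (simp add: real_sqrt_divide)
  have cval: "c = (a + b)^2 * (a - b)^2 / a^2"
    unfolding c_def sL' sl' using b0 ab by (simp add: field_simps power2_eq_square)
  have aval: "\<alpha> = (a - b)^2 / a^2" unfolding \<alpha>_def st using b0 ab by (simp add: field_simps power2_eq_square)
  have bval: "\<beta> = (a + b)^2 / a^2" unfolding \<beta>_def st using b0 ab by (simp add: field_simps power2_eq_square)
  have "0 < c" unfolding cval using b0 ab by simp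
  moreover have "c \<le> \<alpha>" unfolding cval aval using b0 ab ab1
    by (intro divide_right_mono) (auto intro: mult_left_le_one_le mult_right_le_one_le)
  moreover have "\<alpha> < \<beta>" unfolding aval bval using b0 ab
    by (intro divide_strict_right_mono) (auto simp: power2_eq_square algebra_simps)
  ultimately show ?thesis by blast
qed


theorem theorem4:
  fixes \<gamma> \<xi> :: real
  assumes "0 < \<gamma>" "\<gamma> < 1" "\<gamma> < \<xi>" "\<xi> < 1"
  defines "lh \<equiv> (sqrt ((1 - \<gamma>) * \<xi>) - sqrt ((1 - \<xi>) * \<gamma>))^2"
      and "Lh \<equiv> (sqrt ((1 - \<gamma>) * \<xi>) + sqrt ((1 - \<xi>) * \<gamma>))^2"
  defines "\<tau> \<equiv> ((sqrt Lh - sqrt lh) / (sqrt Lh + sqrt lh))^2"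
      and "c \<equiv> 4 / (sqrt (1 / Lh) + sqrt (1 / lh))^2"
  defines "\<alpha> \<equiv> (1 - sqrt \<tau>)^2"
      and "\<beta> \<equiv> (1 + sqrt \<tau>)^2"
  defines "\<omega> \<equiv> 4 / (sqrt (\<beta> - c) + sqrt (\<alpha> - c))^2"
      and "\<kappa> \<equiv> ((sqrt (\<beta> - c) - sqrt (\<alpha> - c)) / (sqrt (\<beta> - c) + sqrt (\<alpha> - c)))^2"
  defines "R \<equiv> R_poly \<kappa> \<omega> c"
  shows "(\<forall>t. poly (R t) 0 = 1 \<and> degree (R t) = t) \<and>
         (\<forall>s t. s \<noteq> t \<longrightarrow>
           ((\<lambda>x. poly (R s) x * poly (R t) x * (x * mp_density \<tau> x / (x - c)))
              has_integral 0) {\<alpha>..\<beta>})"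
proof -
  have P: "0 < c \<and> c \<le> \<alpha> \<and> \<alpha> < \<beta>"
    using gx_params[OF assms(1-4)] unfolding lh_def Lh_def \<tau>_def c_def \<alpha>_def \<beta>_def by simp
  then have c0: "0 < c" and ca: "c \<le> \<alpha>" and ab: "\<alpha> < \<beta>" by auto
  define q where "q = (sqrt (\<beta> - c) - sqrt (\<alpha> - c)) / (sqrt (\<beta> - c) + sqrt (\<alpha> - c))"
  have kq: "\<kappa> = q^2" unfolding \<kappa>_def q_def ..
  have q0: "0 < q" and q1: "q \<le> 1" and w0: "0 < \<omega>"
    and hb: "\<omega> * (\<beta> - c) = (1 + q)^2" and ha: "\<omega> * (\<alpha> - c) = (1 - q)^2"
    using params[OF ca ab] unfolding q_def \<omega>_def by auto
  have N: "1 \<le> poly (Pi_poly \<kappa> t) (- \<omega> * c)" for t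
    using Pi_ge1[of \<kappa> "- \<omega> * c" t] c0 w0 unfolding kq by simp
  have Rv: "poly (R t) x = poly (Pi_poly \<kappa> t) (\<omega> * (x - c)) / poly (Pi_poly \<kappa> t) (- \<omega> * c)" for t x
    unfolding R_def R_poly_def by (simp add: poly_pcompose algebra_simps)
  have part1: "poly (R t) 0 = 1 \<and> degree (R t) = t" for t
  proof
    show "poly (R t) 0 = 1" unfolding Rv using N[of t] by simp
    have "1 / poly (Pi_poly \<kappa> t) (- \<omega> * c) \<noteq> 0" using N[of t] by simp
    then show "degree (R t) = t" unfolding R_def R_poly_def using w0 Pi_deg[of \<kappa> t]
      by (simp add: degree_pcompose)
  qed
  have orth: "((\<lambda>x. poly (R s) x * poly (R t) x * (x * mp_density \<tau> x / (x - c))) has_integral 0) {\<alpha>..\<beta>}"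
    if st: "s < t" for s t
  proof -
    define K where "K = 1 / (poly (Pi_poly \<kappa> s) (- \<omega> * c) * poly (Pi_poly \<kappa> t) (- \<omega> * c) * (2 * pi * \<tau>))"
    have I: "((\<lambda>x. poly (Pi_poly (q^2) s) (\<omega> * (x - c)) * poly (Pi_poly (q^2) t) (\<omega> * (x - c))
            * sqrt ((\<beta> - x) * (x - \<alpha>)) / (x - c)) has_integral 0) {\<alpha>..\<beta>}"
      by (rule orth_x[OF q0 q1 w0 hb ha st])
    then have "((\<lambda>x. K * (poly (Pi_poly (q^2) s) (\<omega> * (x - c)) * poly (Pi_poly (q^2) t) (\<omega> * (x - c))
            * sqrt ((\<beta> - x) * (x - \<alpha>)) / (x - c))) has_integral K * 0) {\<alpha>..\<beta>}"
      by (rule has_integral_mult_right)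
    then have J: "((\<lambda>x. K * (poly (Pi_poly (q^2) s) (\<omega> * (x - c)) * poly (Pi_poly (q^2) t) (\<omega> * (x - c))
            * sqrt ((\<beta> - x) * (x - \<alpha>)) / (x - c))) has_integral 0) {\<alpha>..\<beta>}" by simp
    show ?thesis
    proof (rule has_integral_eq[OF _ J])
      fix x assume x: "x \<in> {\<alpha>..\<beta>}"
      then have x0: "0 < x" using c0 ca by simp
      have md: "mp_density \<tau> x = sqrt ((\<beta> - x) * (x - \<alpha>)) / (2 * pi * \<tau> * x)"
        unfolding mp_density_def \<alpha>_def[symmetric] \<beta>_def[symmetric] using x by simp
      show "K * (poly (Pi_poly (q^2) s) (\<omega> * (x - c)) * poly (Pi_poly (q^2) t) (\<omega> * (x - c))
            * sqrt ((\<beta> - x) * (x - \<alpha>)) / (x - c)) =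
          poly (R s) x * poly (R t) x * (x * mp_density \<tau> x / (x - c))"
        unfolding Rv md K_def kq using x0 by (simp add: field_simps)
    qed
  qed
  show ?thesis
  proof (intro conjI allI impI)
    fix t show "poly (R t) 0 = 1" "degree (R t) = t" using part1 by auto
  next
    fix s t :: nat assume "s \<noteq> t"
    then consider "s < t" | "t < s" by linarith
    then show "((\<lambda>x. poly (R s) x * poly (R t) x * (x * mp_density \<tau> x / (x - c))) has_integral 0) {\<alpha>..\<beta>}"
    proof cases
      case 1 then show ?thesis by (rule orth)
    next
      case 2
      have "((\<lambda>x. poly (R t) x * poly (R s) x * (x * mp_density \<tau> x / (x - c))) has_integral 0) {\<alpha>..\<beta>}"
        using orth[OF 2] .
      then show ?thesis by (simp add: mult.commute mult.left_commute)
    qed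
  qed
qed
end
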